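(* Let $b>1$, $p\ge1$ and $R\subseteq\{0,\ldots,p-1\}$ be such that $(p,R)$ is proper, and let $k$ be the greatest divisor of $p$ coprime with $b$. Then the minimisation of $\mathcal{A}_{R,p}$ possesses exactly $k$ states that belong to $0$-circuits.
   Context: $A_b=\{0,\ldots,b-1\}$. $\mathcal{A}_{R,p}$ is the complete deterministic automaton over $A_b$ with states $\{0,\ldots,p-1\}$, initial state $0$, final states $R$, and transitions $n\xrightarrow{a}(nb+a)\bmod p$. $(p,R)$ is proper if $p$ is the smallest period of $R+p\mathbb{N}$, i.e. there are no $1\le p'<p$ and $R'\subseteq\{0,\ldots,p'-1\}$ with $R+p\mathbb{N}=R'+p'\mathbb{N}$. The minimisation of a complete deterministic automaton is the (unique up to isomorphism) complete deterministic automaton with the fewest states accepting the same language. A $0$-circuit is a circuit all of whose transitions are labelled by the digit $0$. *)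

theory Defs
  imports Main "HOL-Computational_Algebra.Primes"
begin

definition complete_dfa :: "nat \<Rightarrow> nat set \<Rightarrow> nat \<Rightarrow> nat set \<Rightarrow> (nat \<Rightarrow> nat \<Rightarrow> nat) \<Rightarrow> bool" where
  "complete_dfa b Q q0 F delta \<longleftrightarrow>
     finite Q \<and> q0 \<in> Q \<and> F \<subseteq> Q \<and> (\<forall>q\<in>Q. \<forall>a<b. delta q a \<in> Q)"

definition dfa_lang :: "nat \<Rightarrow> nat \<Rightarrow> nat set \<Rightarrow> (nat \<Rightarrow> nat \<Rightarrow> nat) \<Rightarrow> nat list set" where
  "dfa_lang b q0 F delta = {w. set w \<subseteq> {..<b} \<and> foldl delta q0 w \<in> F}"

definition A_delta :: "nat \<Rightarrow> nat \<Rightarrow> nat \<Rightarrow> nat \<Rightarrow> nat" where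
  "A_delta b p n a = (n * b + a) mod p"

definition A_lang :: "nat \<Rightarrow> nat \<Rightarrow> nat set \<Rightarrow> nat list set" where
  "A_lang b p R = dfa_lang b 0 R (A_delta b p)"

definition is_minimisation :: "nat \<Rightarrow> nat list set \<Rightarrow> nat set \<Rightarrow> nat \<Rightarrow> nat set \<Rightarrow> (nat \<Rightarrow> nat \<Rightarrow> nat) \<Rightarrow> bool" where
  "is_minimisation b L Q q0 F delta \<longleftrightarrow>
     complete_dfa b Q q0 F delta \<and> dfa_lang b q0 F delta = L \<and>
     (\<forall>Q' q0' F' delta'. complete_dfa b Q' q0' F' delta' \<and> dfa_lang b q0' F' delta' = L
        \<longrightarrow> card Q \<le> card Q')"

definition on_zero_circuit :: "(nat \<Rightarrow> nat \<Rightarrow> nat) \<Rightarrow> nat \<Rightarrow> bool" where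
  "on_zero_circuit delta q \<longleftrightarrow> (\<exists>n\<ge>1. ((\<lambda>s. delta s 0) ^^ n) q = q)"

definition per_set :: "nat set \<Rightarrow> nat \<Rightarrow> nat set" where
  "per_set R p = {r + p * n | r n. r \<in> R}"

definition proper :: "nat \<Rightarrow> nat set \<Rightarrow> bool" where
  "proper p R \<longleftrightarrow>
     \<not> (\<exists>p' R'. 1 \<le> p' \<and> p' < p \<and> R' \<subseteq> {..<p'} \<and> per_set R p = per_set R' p')"

end

theory Submission
  imports Defs "HOL-Number_Theory.Number_Theory"
begin

lemma foldl_in_Q:
  assumes "complete_dfa b Q q0 F delta" "q \<in> Q" "set w \<subseteq> {..<b}"
  shows "foldl delta q w \<in> Q"
  using assms(2,3)
proof (induction w arbitrary: q)
  case Nil then show ?case by simp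
next
  case (Cons a w)
  have "delta q a \<in> Q" using assms(1) Cons.prems unfolding complete_dfa_def by auto
  then show ?case using Cons by simp
qed

lemma min_reach:
  assumes min: "is_minimisation b L Q q0 F delta" and q: "q \<in> Q"
  shows "\<exists>w. set w \<subseteq> {..<b} \<and> foldl delta q0 w = q"
proof -
  have cd: "complete_dfa b Q q0 F delta" and lang: "dfa_lang b q0 F delta = L"
    and mn: "\<And>Q' q0' F' delta'. complete_dfa b Q' q0' F' delta' \<Longrightarrow> dfa_lang b q0' F' delta' = L
        \<Longrightarrow> card Q \<le> card Q'"
    using min unfolding is_minimisation_def by blast+
  define Q' where "Q' = {foldl delta q0 w | w. set w \<subseteq> {..<b}}"
  have sub: "Q' \<subseteq> Q" unfolding Q'_def using foldl_in_Q[OF cd] cd unfolding complete_dfa_def by auto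
  have fin: "finite Q" using cd unfolding complete_dfa_def by auto
  have "q0 \<in> Q'" unfolding Q'_def by (auto intro: exI[of _ "[]"])
  moreover have "\<forall>q\<in>Q'. \<forall>a<b. delta q a \<in> Q'"
  proof (intro ballI allI impI)
    fix q a assume "q \<in> Q'" "a < b"
    then obtain w where w: "set w \<subseteq> {..<b}" "q = foldl delta q0 w" unfolding Q'_def by auto
    then have "delta q a = foldl delta q0 (w @ [a])" "set (w @ [a]) \<subseteq> {..<b}" using \<open>a < b\<close> by auto
    then show "delta q a \<in> Q'" unfolding Q'_def by blast
  qed
  ultimately have cd': "complete_dfa b Q' q0 (F \<inter> Q') delta"
    unfolding complete_dfa_def using sub fin finite_subset by auto
  have "dfa_lang b q0 (F \<inter> Q') delta = dfa_lang b q0 F delta"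
    unfolding dfa_lang_def Q'_def by auto
  then have "card Q \<le> card Q'" using mn[OF cd'] lang by simp
  then have "Q' = Q" using card_seteq[OF fin sub] by simp
  then show ?thesis using q unfolding Q'_def by auto
qed

lemma min_distinct:
  assumes min: "is_minimisation b L Q q0 F delta" and q1: "q1 \<in> Q" and q2: "q2 \<in> Q"
    and eq: "\<forall>w. set w \<subseteq> {..<b} \<longrightarrow> (foldl delta q1 w \<in> F \<longleftrightarrow> foldl delta q2 w \<in> F)"
  shows "q1 = q2"
proof (rule ccontr)
  assume ne: "q1 \<noteq> q2"
  have cd: "complete_dfa b Q q0 F delta" and lang: "dfa_lang b q0 F delta = L"
    and mn: "\<And>Q' q0' F' delta'. complete_dfa b Q' q0' F' delta' \<Longrightarrow> dfa_lang b q0' F' delta' = L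
        \<Longrightarrow> card Q \<le> card Q'"
    using min unfolding is_minimisation_def by blast+
  have fin: "finite Q" and q0: "q0 \<in> Q" and FQ: "F \<subseteq> Q" and cl: "\<forall>q\<in>Q. \<forall>a<b. delta q a \<in> Q"
    using cd unfolding complete_dfa_def by auto
  define h where "h s = (if s = q2 then q1 else s)" for s
  define delta' where "delta' s a = h (delta s a)" for s a
  have hQ: "s \<in> Q \<Longrightarrow> h s \<in> Q - {q2}" for s using q1 ne unfolding h_def by auto
  have key: "s \<in> Q \<Longrightarrow> set w \<subseteq> {..<b} \<Longrightarrow>
      (foldl delta' (h s) w \<in> F - {q2} \<longleftrightarrow> foldl delta s w \<in> F)" for s w
  proof (induction w arbitrary: s)
    case Nil
    have "q1 \<in> F \<longleftrightarrow> q2 \<in> F" using eq[rule_format, of "[]"] by simp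
    then show ?case using ne unfolding h_def by auto
  next
    case (Cons a w)
    have a: "a < b" and ws: "set w \<subseteq> {..<b}" using Cons.prems by auto
    have hsQ: "h s \<in> Q" using hQ Cons.prems by auto
    have dQ: "delta (h s) a \<in> Q" using cl hsQ a by auto
    have "foldl delta' (h s) (a # w) = foldl delta' (h (delta (h s) a)) w"
      by (simp add: delta'_def)
    then have 1: "foldl delta' (h s) (a # w) \<in> F - {q2} \<longleftrightarrow> foldl delta (delta (h s) a) w \<in> F"
      using Cons.IH[OF dQ ws] by simp
    have 2: "foldl delta (delta (h s) a) w \<in> F \<longleftrightarrow> foldl delta (delta s a) w \<in> F"
    proof (cases "s = q2")
      case True
      then show ?thesis using eq[rule_format, of "a # w"] Cons.prems unfolding h_def by simp
    next
      case False then show ?thesis unfolding h_def by simp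
    qed
    show ?case using 1 2 by simp
  qed
  have cd': "complete_dfa b (Q - {q2}) (h q0) (F - {q2}) delta'"
    unfolding complete_dfa_def delta'_def using fin q0 hQ FQ cl by auto
  have "dfa_lang b (h q0) (F - {q2}) delta' = dfa_lang b q0 F delta"
    unfolding dfa_lang_def using key[OF q0] by auto
  then have "card Q \<le> card (Q - {q2})" using mn[OF cd'] lang by simp
  moreover have "card (Q - {q2}) < card Q" using fin q2 by (meson card_Diff1_less)
  ultimately show False by simp
qed


definition valb :: "nat \<Rightarrow> nat list \<Rightarrow> nat" where
  "valb b w = foldl (\<lambda>n a. n * b + a) 0 w"

lemma foldl_shift: "foldl (\<lambda>n a. n * b + a) n w = n * b ^ length w + valb b w"
  unfolding valb_def
proof (induction w arbitrary: n)
  case Nil then show ?case by simp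
next
  case (Cons a w)
  have "foldl (\<lambda>n a. n * b + a) n (a # w) = (n * b + a) * b ^ length w + foldl (\<lambda>n a. n * b + a) 0 w"
    using Cons[of "n*b+a"] by simp
  moreover have "foldl (\<lambda>n a. n * b + a) 0 (a # w) = a * b ^ length w + foldl (\<lambda>n a. n * b + a) 0 w"
    using Cons[of a] by simp
  ultimately show ?case by (simp add: algebra_simps)
qed

lemma valb_append: "valb b (u @ w) = valb b u * b ^ length w + valb b w"
  using foldl_shift[of b "valb b u" w] by (simp add: valb_def)

lemma A_foldl_gen: "foldl (A_delta b p) (n mod p) w = foldl (\<lambda>n a. n * b + a) n w mod p"
proof (induction w arbitrary: n)
  case Nil then show ?case by simp
next
  case (Cons a w)
  have "A_delta b p (n mod p) a = (n * b + a) mod p"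
    unfolding A_delta_def by (metis mod_add_left_eq mod_mult_left_eq)
  then show ?case using Cons[of "n*b+a"] by simp
qed

lemma A_foldl: "foldl (A_delta b p) 0 w = valb b w mod p"
  using A_foldl_gen[of b p 0 w] by (simp add: valb_def)

lemma A_lang_eq: "A_lang b p R = {w. set w \<subseteq> {..<b} \<and> valb b w mod p \<in> R}"
  unfolding A_lang_def dfa_lang_def A_foldl by simp

fun digl :: "nat \<Rightarrow> nat \<Rightarrow> nat \<Rightarrow> nat list" where
  "digl b 0 n = []"
| "digl b (Suc l) n = digl b l (n div b) @ [n mod b]"

lemma digl_length: "length (digl b l n) = l"
  by (induction l arbitrary: n) auto

lemma digl_set: "b > 0 \<Longrightarrow> set (digl b l n) \<subseteq> {..<b}"
  by (induction l arbitrary: n) auto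

lemma digl_val: "valb b (digl b l n) = n mod b ^ l"
proof (induction l arbitrary: n)
  case 0 then show ?case by (simp add: valb_def)
next
  case (Suc l)
  have "valb b (digl b (Suc l) n) = (n div b) mod b ^ l * b + n mod b"
    using Suc valb_append[of b "digl b l (n div b)" "[n mod b]"] by (simp add: valb_def)
  also have "\<dots> = n mod (b * b ^ l)" by (simp add: mod_mult2_eq)
  finally show ?case by simp
qed

lemma p_lt_pow: "b > 1 \<Longrightarrow> (p::nat) < b ^ p"
proof -
  assume "b > 1"
  have "p < 2 ^ p" by (rule less_exp)
  also have "(2::nat) ^ p \<le> b ^ p" using \<open>b > 1\<close> by (simp add: power_mono)
  finally show ?thesis .
qed

definition Ner :: "nat \<Rightarrow> nat \<Rightarrow> nat set \<Rightarrow> nat \<Rightarrow> nat \<Rightarrow> bool" where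
  "Ner b p R n m \<longleftrightarrow> (\<forall>w. set w \<subseteq> {..<b} \<longrightarrow>
     ((n * b ^ length w + valb b w) mod p \<in> R \<longleftrightarrow> (m * b ^ length w + valb b w) mod p \<in> R))"

definition Sst :: "nat \<Rightarrow> nat \<Rightarrow> nat \<Rightarrow> (nat \<Rightarrow> nat \<Rightarrow> nat) \<Rightarrow> nat \<Rightarrow> nat" where
  "Sst b p q0 delta n = foldl delta q0 (digl b p n)"

context
  fixes b p :: nat and R Q :: "nat set" and q0 :: nat and F delta
  assumes b1: "b > 1" and p1: "p \<ge> 1"
    and min: "is_minimisation b (A_lang b p R) Q q0 F delta"
begin

lemma cdm: "complete_dfa b Q q0 F delta" and langm: "dfa_lang b q0 F delta = A_lang b p R"
  using min unfolding is_minimisation_def by blast+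

lemma st_future:
  assumes "set u \<subseteq> {..<b}" "set w \<subseteq> {..<b}"
  shows "foldl delta (foldl delta q0 u) w \<in> F \<longleftrightarrow>
     ((valb b u mod p) * b ^ length w + valb b w) mod p \<in> R"
proof -
  have "foldl delta (foldl delta q0 u) w \<in> F \<longleftrightarrow> u @ w \<in> dfa_lang b q0 F delta"
    using assms unfolding dfa_lang_def by auto
  also have "\<dots> \<longleftrightarrow> valb b (u @ w) mod p \<in> R" using langm assms by (simp add: A_lang_eq)
  also have "valb b (u @ w) mod p = ((valb b u mod p) * b ^ length w + valb b w) mod p"
    unfolding valb_append by (metis mod_add_left_eq mod_mult_left_eq)
  finally show ?thesis .
qed

lemma st_eq:
  assumes "set u \<subseteq> {..<b}" "set v \<subseteq> {..<b}" "Ner b p R (valb b u mod p) (valb b v mod p)"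
  shows "foldl delta q0 u = foldl delta q0 v"
proof (rule min_distinct[OF min])
  have q0: "q0 \<in> Q" using cdm unfolding complete_dfa_def by auto
  show "foldl delta q0 u \<in> Q" "foldl delta q0 v \<in> Q" using foldl_in_Q[OF cdm q0] assms by auto
  show "\<forall>w. set w \<subseteq> {..<b} \<longrightarrow> (foldl delta (foldl delta q0 u) w \<in> F \<longleftrightarrow> foldl delta (foldl delta q0 v) w \<in> F)"
    using assms(3) st_future assms(1,2) unfolding Ner_def by auto
qed

lemma st_Ner:
  assumes "set u \<subseteq> {..<b}" "set v \<subseteq> {..<b}" "foldl delta q0 u = foldl delta q0 v"
  shows "Ner b p R (valb b u mod p) (valb b v mod p)"
  unfolding Ner_def using st_future[OF assms(1)] st_future[OF assms(2)] assms(3) by auto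

lemma digl_p: "n < p \<Longrightarrow> valb b (digl b p n) = n"
  using digl_val[of b p n] p_lt_pow[OF b1, of p] by simp

lemma digl_setb: "set (digl b l n) \<subseteq> {..<b}" using digl_set b1 by simp

lemma S_st: "set u \<subseteq> {..<b} \<Longrightarrow> foldl delta q0 u = Sst b p q0 delta (valb b u mod p)"
proof -
  assume u: "set u \<subseteq> {..<b}"
  have "valb b (digl b p (valb b u mod p)) = valb b u mod p" using digl_p p1 by simp
  then show ?thesis unfolding Sst_def
    by (intro st_eq) (auto simp: digl_setb u Ner_def)
qed

lemma Q_eq: "Q = Sst b p q0 delta ` {..<p}"
proof
  show "Q \<subseteq> Sst b p q0 delta ` {..<p}"
  proof
    fix q assume "q \<in> Q"
    then obtain u where u: "set u \<subseteq> {..<b}" "foldl delta q0 u = q" using min_reach[OF min] by blast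
    have "valb b u mod p < p" using p1 by simp
    then show "q \<in> Sst b p q0 delta ` {..<p}" using S_st[OF u(1)] u(2) by auto
  qed
  have q0: "q0 \<in> Q" using cdm unfolding complete_dfa_def by auto
  show "Sst b p q0 delta ` {..<p} \<subseteq> Q"
    unfolding Sst_def using foldl_in_Q[OF cdm q0] digl_setb by auto
qed

lemma S_zero: "n < p \<Longrightarrow> delta (Sst b p q0 delta n) 0 = Sst b p q0 delta (n * b mod p)"
proof -
  assume n: "n < p"
  have "delta (Sst b p q0 delta n) 0 = foldl delta q0 (digl b p n @ [0])" by (simp add: Sst_def)
  also have "\<dots> = Sst b p q0 delta (valb b (digl b p n @ [0]) mod p)"
    by (rule S_st) (use digl_setb b1 in auto)
  also have "valb b (digl b p n @ [0]) = n * b" using digl_p[OF n] valb_append[of b _ "[0]"]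
    by (simp add: valb_def)
  finally show ?thesis .
qed

lemma S_iter: "n < p \<Longrightarrow> ((\<lambda>s. delta s 0) ^^ j) (Sst b p q0 delta n) = Sst b p q0 delta (n * b ^ j mod p)"
proof (induction j)
  case 0 then show ?case by simp
next
  case (Suc j)
  have lt: "n * b ^ j mod p < p" using p1 by simp
  have "((\<lambda>s. delta s 0) ^^ Suc j) (Sst b p q0 delta n) = delta (Sst b p q0 delta (n * b ^ j mod p)) 0"
    using Suc by simp
  also have "\<dots> = Sst b p q0 delta ((n * b ^ j mod p) * b mod p)" using S_zero[OF lt] .
  also have "(n * b ^ j mod p) * b mod p = n * b ^ Suc j mod p"
    by (metis mod_mult_left_eq mult.assoc mult.commute power_Suc)
  finally show ?case .
qed

lemma S_Ner: "n < p \<Longrightarrow> m < p \<Longrightarrow> Sst b p q0 delta n = Sst b p q0 delta m \<Longrightarrow> Ner b p R n m"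
  using st_Ner[of "digl b p n" "digl b p m"] digl_setb digl_p unfolding Sst_def by auto

end


lemma per_set_mem: "p \<ge> 1 \<Longrightarrow> R \<subseteq> {..<p} \<Longrightarrow> y \<in> per_set R p \<longleftrightarrow> y mod p \<in> R"
proof
  assume p: "p \<ge> 1" and R: "R \<subseteq> {..<p}"
  { assume "y \<in> per_set R p"
    then obtain r n where "r \<in> R" "y = r + p * n" unfolding per_set_def by auto
    moreover then have "r < p" using R by auto
    ultimately show "y mod p \<in> R" by simp }
  { assume "y mod p \<in> R"
    moreover have "y = y mod p + p * (y div p)" by simp
    ultimately show "y \<in> per_set R p" unfolding per_set_def by blast }
qed

lemma Ner_sym: "Ner b p R n m \<Longrightarrow> Ner b p R m n"
  unfolding Ner_def by auto

lemma ner_period: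
  fixes b p g k i1 i2 :: nat
  assumes b1: "b > 1" and p1: "p \<ge> 1" and Rp: "R \<subseteq> {..<p}" and pr: "proper p R"
    and pgk: "p = g * k" and cop: "coprime k b" and i12: "i1 < i2" "i2 < k"
    and ner: "Ner b p R (g * i1) (g * i2)"
  shows False
proof -
  define B where "B = b ^ p"
  have pB: "p < B" unfolding B_def using p_lt_pow[OF b1] .
  have H: "(g * i1 * B + x) mod p \<in> R \<longleftrightarrow> (g * i2 * B + x) mod p \<in> R" if "x < B" for x
  proof -
    have "valb b (digl b p x) = x" using digl_val[of b p x] that unfolding B_def by simp
    moreover have "length (digl b p x) = p" by (rule digl_length)
    moreover have "set (digl b p x) \<subseteq> {..<b}" using digl_set b1 by simp
    ultimately show ?thesis using ner unfolding Ner_def B_def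
      by (metis mult.assoc)
  qed
  define d where "d = g * (i2 - i1) * B"
  have d2: "g * i2 * B = g * i1 * B + d" unfolding d_def using i12
    by (simp add: algebra_simps diff_mult_distrib2)
  have shift: "y mod p \<in> R \<longleftrightarrow> (y + d) mod p \<in> R" for y
  proof -
    define r1 where "r1 = g * i1 * B mod p"
    define x where "x = (y + (p - r1)) mod p"
    have r1p: "r1 < p" unfolding r1_def using p1 by simp
    have "x < p" unfolding x_def using p1 by simp
    then have xB: "x < B" using pB by simp
    have e: "g * i1 * B = p * (g * i1 * B div p) + r1" unfolding r1_def by simp
    have "(g * i1 * B + x) mod p = (g * i1 * B + (y + (p - r1))) mod p"
      unfolding x_def by (simp add: mod_add_right_eq)
    also have "g * i1 * B + (y + (p - r1)) = y + p * (g * i1 * B div p + 1)"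
      using e r1p by (simp add: algebra_simps)
    also have "(y + p * (g * i1 * B div p + 1)) mod p = y mod p" by (rule mod_mult_self2)
    finally have 1: "(g * i1 * B + x) mod p = y mod p" .
    have "(g * i2 * B + x) mod p = (d + (g * i1 * B + x)) mod p" using d2 by (simp add: algebra_simps)
    also have "\<dots> = (d + y) mod p" using 1 by (metis mod_add_right_eq)
    finally have 2: "(g * i2 * B + x) mod p = (y + d) mod p" by (simp add: add.commute)
    show ?thesis using H[OF xB] 1 2 by simp
  qed
  have iter: "y mod p \<in> R \<longleftrightarrow> (y + c * d) mod p \<in> R" for c y
  proof (induction c arbitrary: y)
    case 0 then show ?case by simp
  next
    case (Suc c)
    then show ?case using shift[of "y + c * d"] by (simp add: algebra_simps)
  qed
  have g0: "g > 0" using pgk p1 by (cases g) auto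
  have B0: "B > 0" using pB by simp
  have d0: "d \<noteq> 0" unfolding d_def using g0 B0 i12 by simp
  have ndvd: "\<not> p dvd d"
  proof
    assume "p dvd d"
    then have "g * k dvd g * ((i2 - i1) * B)" using pgk unfolding d_def by (simp add: mult.assoc)
    then have "k dvd (i2 - i1) * B" using g0 by simp
    moreover have "coprime k B" unfolding B_def using cop by simp
    ultimately have "k dvd (i2 - i1)" using coprime_dvd_mult_left_iff by blast
    then have "k \<le> i2 - i1" using i12 by (intro dvd_imp_le) auto
    then show False using i12 by simp
  qed
  define p' where "p' = gcd d p"
  obtain u v where uv: "d * u = p * v + p'" using bezout_nat[OF d0, of p] unfolding p'_def by blast
  have shift2: "y mod p \<in> R \<longleftrightarrow> (y + p') mod p \<in> R" for y
  proof -
    have "(y + u * d) mod p = (y + p' + p * v) mod p" using uv by (simp add: algebra_simps)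
    also have "\<dots> = (y + p') mod p" by simp
    finally show ?thesis using iter[of y u] by simp
  qed
  have iter2: "y mod p \<in> R \<longleftrightarrow> (y + c * p') mod p \<in> R" for c y
  proof (induction c arbitrary: y)
    case 0 then show ?case by simp
  next
    case (Suc c)
    then show ?case using shift2[of "y + c * p'"] by (simp add: algebra_simps)
  qed
  have p'le: "p' \<le> p" unfolding p'_def using p1 by (simp add: gcd_le2_nat)
  have p'ne: "p' \<noteq> p" using ndvd gcd_dvd1[of d p] unfolding p'_def by metis
  have p'1: "p' \<ge> 1" unfolding p'_def using p1 by (simp add: Suc_leI)
  have p'p: "p' < p" using p'le p'ne by simp
  define R' where "R' = {r \<in> R. r < p'}"
  have R'sub: "R' \<subseteq> {..<p'}" unfolding R'_def by auto
  have "y \<in> per_set R p \<longleftrightarrow> y \<in> per_set R' p'" for y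
  proof -
    have "y mod p \<in> R \<longleftrightarrow> (y mod p' + (y div p') * p') mod p \<in> R" by simp
    also have "\<dots> \<longleftrightarrow> (y mod p') mod p \<in> R" using iter2[of "y mod p'" "y div p'"] by simp
    also have "(y mod p') mod p = y mod p'"
    proof -
      have "y mod p' < p'" using p'1 by simp
      then show ?thesis using p'p by simp
    qed
    finally have "y mod p \<in> R \<longleftrightarrow> y mod p' \<in> R'" unfolding R'_def using p'1 by auto
    then show "y \<in> per_set R p \<longleftrightarrow> y \<in> per_set R' p'"
      using per_set_mem[OF p1 Rp] per_set_mem[OF p'1 R'sub] by simp
  qed
  then have "per_set R p = per_set R' p'" by blast
  then show False using pr p'1 p'p R'sub unfolding proper_def by blast
qed

lemma g_dvd_pow:
  fixes b p g k :: nat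
  assumes pgk: "p = g * k" and k1: "k \<ge> 1" and p1: "p \<ge> 1"
    and kmax: "\<And>d. d dvd p \<Longrightarrow> coprime d b \<Longrightarrow> d \<le> k" and cop: "coprime k b"
  shows "g dvd b ^ g"
proof -
  have "h dvd g \<Longrightarrow> h dvd b ^ h" for h
  proof (induction h rule: less_induct)
    case (less h)
    show ?case
    proof (cases "h = 1")
      case True then show ?thesis by simp
    next
      case False
      have h0: "h \<noteq> 0" using less.prems pgk p1 by auto
      obtain q where q: "prime q" "q dvd h" using prime_factor_nat[OF False] by blast
      have q2: "q \<ge> 2" using q(1) prime_ge_2_nat by blast
      have qb: "q dvd b"
      proof (rule ccontr)
        assume "\<not> q dvd b"
        then have "coprime q b" using q(1) prime_imp_coprime by blast
        moreover have kb: "coprime k b" by (rule cop)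
        ultimately have "coprime (q * k) b" by simp
        moreover have "q * k dvd p" using pgk q(2) less.prems by (simp add: mult_dvd_mono dvd_trans)
        ultimately have "q * k \<le> k" using kmax by blast
        moreover have "2 * k \<le> q * k" using q2 by simp
        ultimately show False using k1 by linarith
      qed
      obtain h' where hh: "h = q * h'" using q(2) by blast
      have h'0: "h' \<ge> 1" using h0 hh by (cases h') auto
      have h'lt: "h' < h" using hh q2 h'0 by simp
      have "h' dvd g" using hh less.prems by (metis dvd_mult_right)
      then have "h' dvd b ^ h'" using less.IH[OF h'lt] by simp
      then have "q * h' dvd b * b ^ h'" using qb by (simp add: mult_dvd_mono)
      moreover have "Suc h' \<le> h" using hh q2 h'0 by (metis Suc_leI h'lt)
      then have "b ^ Suc h' dvd b ^ h" by (rule le_imp_power_dvd)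
      ultimately show ?thesis using hh by (metis dvd_trans power_Suc)
    qed
  qed
  then show ?thesis by simp
qed


theorem proposition23:
  fixes b p k :: nat and R :: "nat set"
  assumes "b > 1" and "p \<ge> 1" and "R \<subseteq> {..<p}" and "proper p R"
    and "k = (GREATEST d. d dvd p \<and> coprime d b)"
  shows "(\<exists>Q q0 F delta. is_minimisation b (A_lang b p R) Q q0 F delta)
       \<and> (\<forall>Q q0 F delta. is_minimisation b (A_lang b p R) Q q0 F delta
            \<longrightarrow> card {q \<in> Q. on_zero_circuit delta q} = k)"
proof
  note b1 = assms(1) and p1 = assms(2) and Rp = assms(3) and pr = assms(4)
  show "\<exists>Q q0 F delta. is_minimisation b (A_lang b p R) Q q0 F delta"
  proof -
    define P where "P c \<longleftrightarrow> (\<exists>Q q0 F delta. complete_dfa b Q q0 F delta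
        \<and> dfa_lang b q0 F delta = A_lang b p R \<and> card Q = c)" for c
    have "complete_dfa b {..<p} 0 R (A_delta b p)"
      unfolding complete_dfa_def A_delta_def using p1 Rp by auto
    then have "P p" unfolding P_def A_lang_def by (intro exI[of _ "{..<p}"]) auto
    then have "P (LEAST c. P c)" by (rule LeastI)
    then obtain Q q0 F delta where m: "complete_dfa b Q q0 F delta"
      "dfa_lang b q0 F delta = A_lang b p R" "card Q = (LEAST c. P c)" unfolding P_def by blast
    have "is_minimisation b (A_lang b p R) Q q0 F delta"
      unfolding is_minimisation_def
    proof (intro conjI m(1,2) allI impI)
      fix Q' q0' F' delta' assume "complete_dfa b Q' q0' F' delta' \<and> dfa_lang b q0' F' delta' = A_lang b p R"
      then have "P (card Q')" unfolding P_def by blast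
      then show "card Q \<le> card Q'" using m(3) by (simp add: Least_le)
    qed
    then show ?thesis by blast
  qed
  have P1: "1 dvd p \<and> coprime 1 b" by simp
  have bound: "\<And>y. y dvd p \<and> coprime y b \<Longrightarrow> y \<le> p" using p1 by (auto intro: dvd_imp_le)
  have kP: "k dvd p \<and> coprime k b" unfolding assms(5) by (rule GreatestI_nat[where P="\<lambda>d. d dvd p \<and> coprime d b", OF P1 bound])
  have kmax: "\<And>d. d dvd p \<Longrightarrow> coprime d b \<Longrightarrow> d \<le> k"
    unfolding assms(5) using bound by (intro Greatest_le_nat) auto
  have kdvd: "k dvd p" and cop: "coprime k b" using kP by auto
  have k1: "k \<ge> 1" using kdvd p1 by (cases k) auto
  define g where "g = p div k"
  have pgk: "p = g * k" unfolding g_def using kdvd by simp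
  have g1: "g \<ge> 1" using pgk p1 by (cases g) auto
  have gdvd: "g dvd b ^ g" using g_dvd_pow[OF pgk k1 p1 kmax cop] by blast
  show "\<forall>Q q0 F delta. is_minimisation b (A_lang b p R) Q q0 F delta
            \<longrightarrow> card {q \<in> Q. on_zero_circuit delta q} = k"
  proof (intro allI impI)
    fix Q q0 F delta
    assume min: "is_minimisation b (A_lang b p R) Q q0 F delta"
    define S where "S = Sst b p q0 delta"
    define f where "f = (\<lambda>s. delta s 0)"
    define G where "G = (\<lambda>i. g * i) ` {..<k}"
    note QS = Q_eq[OF b1 p1 min, folded S_def]
    have iterS: "n < p \<Longrightarrow> (f ^^ j) (S n) = S (n * b ^ j mod p)" for n j
      unfolding f_def S_def by (rule S_iter[OF b1 p1 min])
    have Gp: "i < k \<Longrightarrow> g * i < p" for i using pgk g1 by simp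
    have "{q \<in> Q. on_zero_circuit delta q} = S ` G"
    proof
      show "{q \<in> Q. on_zero_circuit delta q} \<subseteq> S ` G"
      proof
        fix q assume "q \<in> {q \<in> Q. on_zero_circuit delta q}"
        then have qQ: "q \<in> Q" and zc: "on_zero_circuit delta q" by auto
        obtain j where j: "j \<ge> 1" "(f ^^ j) q = q" using zc unfolding on_zero_circuit_def f_def by blast
        have rep: "((f ^^ j) ^^ c) q = q" for c by (induction c) (use j(2) in auto)
        have qjg: "(f ^^ (j * g)) q = q" using rep[of g] by (simp add: funpow_mult)
        obtain n where n: "n < p" "q = S n" using qQ QS by auto
        define m where "m = n * b ^ (j * g) mod p"
        have qm: "q = S m" using qjg iterS[OF n(1)] n(2) unfolding m_def by simp
        have "b ^ g dvd b ^ (j * g)" using j(1) by (intro le_imp_power_dvd) simp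
        then have "g dvd b ^ (j * g)" using gdvd by (rule dvd_trans[rotated])
        then have "g dvd n * b ^ (j * g)" by (rule dvd_mult)
        moreover have "g dvd p" using pgk by simp
        ultimately have gm: "g dvd m" unfolding m_def by (simp add: dvd_mod)
        have mp: "m < p" unfolding m_def using p1 by simp
        have "m = g * (m div g)" using gm by simp
        moreover have "m div g < k"
        proof -
          have "g * (m div g) < g * k" using mp pgk \<open>m = g * (m div g)\<close> by simp
          then show ?thesis by simp
        qed
        ultimately have "m \<in> G" unfolding G_def by blast
        then show "q \<in> S ` G" using qm by blast
      qed
      show "S ` G \<subseteq> {q \<in> Q. on_zero_circuit delta q}"
      proof
        fix q assume "q \<in> S ` G"
        then obtain i where i: "i < k" "q = S (g * i)" unfolding G_def by blast
        have np: "g * i < p" using Gp[OF i(1)] .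
        have qQ: "q \<in> Q" using QS np i(2) by auto
        define j where "j = totient k"
        have j1: "j \<ge> 1" unfolding j_def using k1 by (simp add: Suc_leI)
        have "[b ^ j = 1] (mod k)" unfolding j_def using cop by (intro euler_theorem) (simp add: coprime_commute)
        then have "k dvd b ^ j - 1" by (rule cong_to_1_nat)
        then obtain c where c: "b ^ j - 1 = k * c" by blast
        have "b ^ j \<ge> 1" using b1 by simp
        then have bj: "b ^ j = 1 + k * c" using c by simp
        have "g * i * b ^ j = g * i + p * (i * c)" unfolding bj pgk by (simp add: algebra_simps)
        then have "g * i * b ^ j mod p = g * i" using np by simp
        then have "(f ^^ j) q = q" using iterS[OF np, of j] i(2) by simp
        then have "on_zero_circuit delta q" unfolding on_zero_circuit_def f_def using j1 by blast
        then show "q \<in> {q \<in> Q. on_zero_circuit delta q}" using qQ by blast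
      qed
    qed
    moreover have "inj_on S G"
    proof (rule inj_onI)
      fix x y assume "x \<in> G" "y \<in> G" "S x = S y"
      then obtain i1 i2 where i: "i1 < k" "i2 < k" "x = g * i1" "y = g * i2" "S (g*i1) = S (g*i2)"
        unfolding G_def by blast
      have N: "Ner b p R (g * i1) (g * i2)"
        using S_Ner[OF b1 p1 min Gp[OF i(1)] Gp[OF i(2)]] i(5) unfolding S_def by blast
      show "x = y"
      proof (cases i1 i2 rule: linorder_cases)
        case less then show ?thesis using ner_period[OF b1 p1 Rp pr pgk cop less i(2) N] by blast
      next
        case equal then show ?thesis using i by simp
      next
        case greater then show ?thesis using ner_period[OF b1 p1 Rp pr pgk cop greater i(1) Ner_sym[OF N]] by blast
      qed
    qed
    moreover have "card G = k" unfolding G_def using g1 by (subst card_image) (auto intro: inj_onI)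
    ultimately show "card {q \<in> Q. on_zero_circuit delta q} = k" by (simp add: card_image)
  qed
qed

end
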